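(* There is an integer $n_1\ge 1$ such that every graph $H$ with $n\ge n_1$ vertices has geometric pebbling threshold at least $\sqrt{n\log 2}$.
   Context: Pebbling: a distribution on a graph assigns a nonnegative integer number of pebbles to each vertex. A pebbling move removes two pebbles from a vertex having at least two pebbles and adds one pebble to an adjacent vertex. A vertex is pebblable if some sequence of pebbling moves from the distribution ends with at least one pebble on it; a distribution is solvable if every vertex is pebblable. The geometric distribution on $\{0,1,2,\dots\}$ with parameter $0<p\le 1$ assigns probability $p(1-p)^k$ to $k$. For a graph $H$ with $n>0$ vertices, the geometric pebbling threshold of $H$ is the unique positive real $x$ such that, if an independent geometrically distributed number of pebbles with parameter $(1+x/n)^{-1}$ is placed on each vertex of $H$, the probability that the distribution is solvable equals $\tfrac12$. $\log$ is the natural logarithm. *)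

theory Defs
  imports "HOL-Probability.Probability"
begin

text \<open>A (finite simple) graph: finite vertex set V (vertices are naturals, so every
finite graph is represented up to isomorphism), symmetric irreflexive edge relation on V.\<close>
definition is_graph :: "nat set \<Rightarrow> (nat \<Rightarrow> nat \<Rightarrow> bool) \<Rightarrow> bool" where
  "is_graph V E \<longleftrightarrow> finite V \<and> (\<forall>u v. E u v \<longrightarrow> u \<in> V \<and> v \<in> V)
     \<and> (\<forall>u v. E u v \<longrightarrow> E v u) \<and> (\<forall>u. \<not> E u u)"

definition pebbling_move :: "(nat \<Rightarrow> nat \<Rightarrow> bool) \<Rightarrow> (nat \<Rightarrow> nat) \<Rightarrow> (nat \<Rightarrow> nat) \<Rightarrow> bool" where
  "pebbling_move E d d' \<longleftrightarrow>
     (\<exists>u v. E u v \<and> 2 \<le> d u \<and> d' = d(u := d u - 2, v := d v + 1))"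

definition pebblable :: "(nat \<Rightarrow> nat \<Rightarrow> bool) \<Rightarrow> (nat \<Rightarrow> nat) \<Rightarrow> nat \<Rightarrow> bool" where
  "pebblable E d r \<longleftrightarrow> (\<exists>d'. (pebbling_move E)\<^sup>*\<^sup>* d d' \<and> 1 \<le> d' r)"

definition solvable :: "nat set \<Rightarrow> (nat \<Rightarrow> nat \<Rightarrow> bool) \<Rightarrow> (nat \<Rightarrow> nat) \<Rightarrow> bool" where
  "solvable V E d \<longleftrightarrow> (\<forall>r\<in>V. pebblable E d r)"

definition solvable_prob :: "nat set \<Rightarrow> (nat \<Rightarrow> nat \<Rightarrow> bool) \<Rightarrow> real \<Rightarrow> real" where
  "solvable_prob V E p =
     measure_pmf.prob (Pi_pmf V 0 (\<lambda>_. geometric_pmf p)) {d. solvable V E d}"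

definition geom_threshold :: "nat set \<Rightarrow> (nat \<Rightarrow> nat \<Rightarrow> bool) \<Rightarrow> real" where
  "geom_threshold V E =
     (THE x. 0 < x \<and> solvable_prob V E (inverse (1 + x / real (card V))) = 1/2)"

end

theory Submission
  imports Defs "HOL-Probability.Probability"
begin


lemma suminf_strict:
  fixes f g :: "nat \<Rightarrow> real"
  assumes "summable f" "summable g" "\<And>n. f n \<le> g n" "f i < g i"
  shows "suminf f < suminf g"
proof -
  have "0 < suminf (\<lambda>n. g n - f n)"
    using assms by (subst suminf_pos_iff) (auto intro: summable_diff)
  also have "suminf (\<lambda>n. g n - f n) = suminf g - suminf f"
    using assms by (intro suminf_diff[symmetric]) auto
  finally show ?thesis by simp
qed

lemma summable_geo_bounded:
  fixes a :: "nat \<Rightarrow> real"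
  assumes "0 \<le> q" "q < 1" "\<And>k. \<bar>a k\<bar> \<le> 1"
  shows "summable (\<lambda>k. q^k * a k)"
proof (rule summable_comparison_test[of _ "\<lambda>k. q^k"])
  show "\<exists>N. \<forall>n\<ge>N. norm (q ^ n * a n) \<le> q ^ n"
    using assms by (auto simp: abs_mult intro!: mult_left_le)
  show "summable (\<lambda>k. q^k)" using assms by (intro summable_geometric) auto
qed

lemma abel_geo:
  fixes a :: "nat \<Rightarrow> real"
  assumes "0 \<le> q" "q < 1" "\<And>k. \<bar>a k\<bar> \<le> 1"
  shows "(\<Sum>k. (1-q) * q^k * a k) = a 0 + (\<Sum>k. q^Suc k * (a (Suc k) - a k))"
proof -
  have s1: "summable (\<lambda>k. q^k * a k)" using summable_geo_bounded assms by blast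
  have s2: "summable (\<lambda>k. q^Suc k * a k)" using summable_mult[OF s1, of q]
    by (simp add: mult.assoc)
  have s3: "summable (\<lambda>k. q^Suc k * a (Suc k))" using s1 summable_Suc_iff[of "\<lambda>k. q^k * a k"]
    by simp
  have "(\<Sum>k. (1-q) * q^k * a k) = (\<Sum>k. q^k * a k - q^Suc k * a k)"
    by (simp add: algebra_simps)
  also have "\<dots> = (\<Sum>k. q^k * a k) - (\<Sum>k. q^Suc k * a k)"
    using s1 s2 by (intro suminf_diff[symmetric]) auto
  also have "(\<Sum>k. q^k * a k) = (\<Sum>k. q^Suc k * a (Suc k)) + a 0"
    using suminf_split_head[OF s1] s3 by (simp add: suminf_split_initial_segment)
  also have "(\<Sum>k. q^Suc k * (a (Suc k) - a k)) = (\<Sum>k. q^Suc k * a (Suc k)) - (\<Sum>k. q^Suc k * a k)"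
    using suminf_diff[OF s3 s2] by (simp add: right_diff_distrib)
  ultimately show ?thesis by simp
qed

lemma geo_mono:
  fixes a :: "nat \<Rightarrow> real"
  assumes "0 \<le> q" "q \<le> q'" "q' < 1" "\<And>k. 0 \<le> a k" "\<And>k. a k \<le> 1" "\<And>k. a k \<le> a (Suc k)"
  shows "(\<Sum>k. (1-q) * q^k * a k) \<le> (\<Sum>k. (1-q') * q'^k * a k)"
    and "q < q' \<Longrightarrow> a i < a (Suc i) \<Longrightarrow> (\<Sum>k. (1-q) * q^k * a k) < (\<Sum>k. (1-q') * q'^k * a k)"
proof -
  have ab: "\<And>k. \<bar>a k\<bar> \<le> 1" using assms by (simp add: abs_le_iff)
  have ab2: "\<And>k. \<bar>a (Suc k) - a k\<bar> \<le> 1" using assms by (smt (verit) assms(4) assms(5))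
  have e1: "(\<Sum>k. (1-q) * q^k * a k) = a 0 + (\<Sum>k. q^Suc k * (a (Suc k) - a k))"
    using abel_geo[of q a, OF assms(1) _ ab] assms by linarith
  have e2: "(\<Sum>k. (1-q') * q'^k * a k) = a 0 + (\<Sum>k. q'^Suc k * (a (Suc k) - a k))"
    using abel_geo[of q' a, OF _ _ ab] assms by linarith
  have s: "summable (\<lambda>k. q^Suc k * (a (Suc k) - a k))"
    using summable_mult[OF summable_geo_bounded[OF assms(1) _ ab2], of q] assms
    by (simp add: mult.assoc)
  have s': "summable (\<lambda>k. q'^Suc k * (a (Suc k) - a k))"
    using summable_mult[OF summable_geo_bounded[of q' _, OF _ _ ab2], of q'] assms
    by (simp add: mult.assoc)
  have le: "\<And>k. q^Suc k * (a (Suc k) - a k) \<le> q'^Suc k * (a (Suc k) - a k)"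
    using assms by (intro mult_right_mono power_mono) auto
  show "(\<Sum>k. (1-q) * q^k * a k) \<le> (\<Sum>k. (1-q') * q'^k * a k)"
    unfolding e1 e2 using suminf_le[OF le s s'] by simp
  assume "q < q'" "a i < a (Suc i)"
  then have "q^Suc i * (a (Suc i) - a i) < q'^Suc i * (a (Suc i) - a i)"
    using assms by (intro mult_strict_right_mono power_strict_mono) auto
  then show "(\<Sum>k. (1-q) * q^k * a k) < (\<Sum>k. (1-q') * q'^k * a k)"
    unfolding e1 e2 using suminf_strict[OF s s' le] by simp
qed



lemma prob_bind_nat:
  fixes G :: "nat pmf" and F :: "nat \<Rightarrow> 'a pmf"
  assumes sG: "summable (pmf G)"
  shows "(\<lambda>k. pmf G k * measure_pmf.prob (F k) T) sums measure_pmf.prob (bind_pmf G F) T"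
proof -
  have s: "summable (\<lambda>k. pmf G k * measure_pmf.prob (F k) T)"
    by (rule summable_comparison_test[OF _ sG])
       (auto intro!: exI[of _ 0] mult_left_le simp: pmf_nonneg)
  have "emeasure (bind_pmf G F) T = (\<integral>\<^sup>+x. emeasure (F x) T \<partial>G)" by simp
  also have "\<dots> = (\<integral>\<^sup>+x. ennreal (pmf G x) * emeasure (F x) T \<partial>count_space UNIV)"
    by (rule nn_integral_measure_pmf)
  also have "\<dots> = (\<Sum>k. ennreal (pmf G k) * emeasure (F k) T)"
    by (rule nn_integral_count_space_nat)
  also have "\<dots> = (\<Sum>k. ennreal (pmf G k * measure_pmf.prob (F k) T))"
    by (simp add: measure_pmf.emeasure_eq_measure ennreal_mult pmf_nonneg)
  also have "\<dots> = ennreal (\<Sum>k. pmf G k * measure_pmf.prob (F k) T)"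
    using s by (intro suminf_ennreal2) (auto simp: pmf_nonneg)
  finally have "measure_pmf.prob (bind_pmf G F) T = (\<Sum>k. pmf G k * measure_pmf.prob (F k) T)"
    by (simp add: measure_pmf.emeasure_eq_measure suminf_nonneg[OF s] pmf_nonneg)
  with s show ?thesis by (simp add: summable_sums)
qed

definition PP :: "nat set \<Rightarrow> real \<Rightarrow> (nat \<Rightarrow> nat) set \<Rightarrow> real" where
  "PP V q S = measure_pmf.prob (Pi_pmf V 0 (\<lambda>_. geometric_pmf (1 - q))) S"

lemma pmf_geom_q: "0 \<le> q \<Longrightarrow> q < 1 \<Longrightarrow> pmf (geometric_pmf (1 - q)) k = (1 - q) * q ^ k"
  by simp

lemma PP_decomp:
  assumes "finite V" "x \<notin> V" "0 \<le> q" "q < 1"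
  shows "(\<lambda>k. (1 - q) * q ^ k * PP V q {f. f(x := k) \<in> S}) sums PP (insert x V) q S"
proof -
  let ?G = "geometric_pmf (1 - q)"
  let ?P = "Pi_pmf V 0 (\<lambda>_. geometric_pmf (1 - q))"
  have "pmf ?G = (\<lambda>k. (1-q) * q^k)" using assms by (intro ext) simp
  then have sG: "summable (pmf ?G)"
    using assms summable_mult[OF summable_geometric[of q], of "1-q"] by simp
  have "PP (insert x V) q S = measure_pmf.prob (pair_pmf ?G ?P) ((\<lambda>(y,f). f(x:=y)) -` S)"
    unfolding PP_def using assms by (simp add: Pi_pmf_insert)
  also have "pair_pmf ?G ?P = bind_pmf ?G (\<lambda>k. map_pmf (Pair k) ?P)"
    by (simp add: pair_pmf_def map_pmf_def)
  finally have e: "PP (insert x V) q S = measure_pmf.prob (bind_pmf ?G (\<lambda>k. map_pmf (Pair k) ?P)) ((\<lambda>(y,f). f(x:=y)) -` S)" .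
  have "(\<lambda>k. pmf ?G k * measure_pmf.prob (map_pmf (Pair k) ?P) ((\<lambda>(y,f). f(x:=y)) -` S)) sums PP (insert x V) q S"
    unfolding e by (rule prob_bind_nat[OF sG])
  moreover have "\<And>k. pmf ?G k * measure_pmf.prob (map_pmf (Pair k) ?P) ((\<lambda>(y,f). f(x:=y)) -` S)
     = (1 - q) * q ^ k * PP V q {f. f(x := k) \<in> S}"
    using assms by (simp add: PP_def vimage_def)
  ultimately show ?thesis by simp
qed

lemma PP_nonneg: "0 \<le> PP V q S" by (simp add: PP_def)
lemma PP_le1: "PP V q S \<le> 1" by (simp add: PP_def)



definition upset :: "(nat \<Rightarrow> nat) set \<Rightarrow> bool" where
  "upset S \<longleftrightarrow> (\<forall>d d'. d \<in> S \<longrightarrow> (\<forall>w. d w \<le> d' w) \<longrightarrow> d' \<in> S)"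

lemma upset_section: "upset S \<Longrightarrow> upset {f. f(x := k) \<in> S}"
proof -
  assume u: "upset S"
  show ?thesis unfolding upset_def
  proof (intro allI impI)
    fix f g assume "f \<in> {f. f(x := k) \<in> S}" "\<forall>w. f w \<le> g w"
    moreover have "\<forall>w. (f(x := k)) w \<le> (g(x := k)) w" using calculation by simp
    ultimately show "g \<in> {f. f(x := k) \<in> S}" using u unfolding upset_def by blast
  qed
qed

lemma section_mono: "upset S \<Longrightarrow> {f. f(x := k) \<in> S} \<subseteq> {f. f(x := Suc k) \<in> S}"
proof
  fix f assume u: "upset S" and "f \<in> {f. f(x := k) \<in> S}"
  moreover have "\<forall>w. (f(x := k)) w \<le> (f(x := Suc k)) w" by simp
  ultimately show "f \<in> {f. f(x := Suc k) \<in> S}" unfolding upset_def by blast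
qed

lemma PP_empty: "PP {} q S = (if (\<lambda>_. 0) \<in> S then 1 else 0)"
  by (simp add: PP_def)

lemma PP_sec_mono: "upset S \<Longrightarrow> PP V q {f. f(x := k) \<in> S} \<le> PP V q {f. f(x := Suc k) \<in> S}"
  unfolding PP_def by (intro measure_pmf.finite_measure_mono section_mono) auto

lemma PP_mono:
  assumes "finite V"
  shows "upset S \<Longrightarrow> 0 \<le> q \<Longrightarrow> q \<le> q' \<Longrightarrow> q' < 1 \<Longrightarrow> PP V q S \<le> PP V q' S"
  using assms
proof (induction V arbitrary: S rule: finite_induct)
  case empty
  then show ?case by (simp add: PP_empty)
next
  case (insert x F)
  define a where "a k t = PP F t {f. f(x := k) \<in> S}" for k t
  have s1: "(\<lambda>k. (1 - q) * q ^ k * a k q) sums PP (insert x F) q S"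
    unfolding a_def using insert by (intro PP_decomp) auto
  have s2: "(\<lambda>k. (1 - q') * q' ^ k * a k q') sums PP (insert x F) q' S"
    unfolding a_def using insert by (intro PP_decomp) auto
  have s3: "summable (\<lambda>k. (1 - q) * q ^ k * a k q')"
    using summable_mult[OF summable_geo_bounded[of q "\<lambda>k. a k q'"], of "1-q"] insert
    by (simp add: a_def PP_nonneg PP_le1 mult.assoc)
  have "PP (insert x F) q S = (\<Sum>k. (1 - q) * q ^ k * a k q)" by (rule sums_unique[OF s1])
  also have "\<dots> \<le> (\<Sum>k. (1 - q) * q ^ k * a k q')"
  proof (rule suminf_le[OF _ sums_summable[OF s1] s3])
    fix k
    have "a k q \<le> a k q'" unfolding a_def using insert upset_section by blast
    then show "(1 - q) * q ^ k * a k q \<le> (1 - q) * q ^ k * a k q'"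
      using insert by (intro mult_left_mono) auto
  qed
  also have "\<dots> \<le> (\<Sum>k. (1 - q') * q' ^ k * a k q')"
    using insert by (intro geo_mono(1)) (auto simp: a_def PP_nonneg PP_le1 PP_sec_mono)
  also have "\<dots> = PP (insert x F) q' S" by (rule sums_unique[OF s2, symmetric])
  finally show ?case .
qed

lemma PP_pos:
  assumes "finite V" "0 < q" "q < 1" "d \<in> T" "\<forall>w. w \<notin> V \<longrightarrow> d w = 0"
  shows "0 < PP V q T"
proof -
  have "pmf (Pi_pmf V 0 (\<lambda>_. geometric_pmf (1 - q))) d = (\<Prod>v\<in>V. (1-q) * q ^ d v)"
    using assms by (subst pmf_Pi') (auto simp: mult.commute)
  also have "\<dots> > 0" using assms by (intro prod_pos) auto
  finally have "0 < measure_pmf.prob (Pi_pmf V 0 (\<lambda>_. geometric_pmf (1 - q))) {d}"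
    by (simp add: measure_pmf_single)
  also have "\<dots> \<le> PP V q T" unfolding PP_def using assms
    by (intro measure_pmf.finite_measure_mono) auto
  finally show ?thesis .
qed

lemma PP_zero:
  assumes "finite V" "\<And>d. d \<in> T \<Longrightarrow> \<exists>w. w \<notin> V \<and> d w \<noteq> 0"
  shows "PP V q T = 0"
  unfolding PP_def measure_pmf_zero_iff
proof (rule equals0I)
  fix d assume d: "d \<in> set_pmf (Pi_pmf V 0 (\<lambda>_. geometric_pmf (1 - q))) \<inter> T"
  have sub: "set_pmf (Pi_pmf V 0 (\<lambda>_. geometric_pmf (1 - q))) \<subseteq> {f. \<forall>x. x \<notin> V \<longrightarrow> f x = 0}"
    by (rule set_Pi_pmf_subset[OF assms(1)])
  from d sub have "\<forall>x. x \<notin> V \<longrightarrow> d x = 0" by blast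
  moreover from d assms(2) obtain w where "w \<notin> V" "d w \<noteq> 0" by blast
  ultimately show False by simp
qed

lemma mono_seq_jump:
  fixes a :: "nat \<Rightarrow> real"
  assumes "a 0 < a K"
  shows "\<exists>i. a i < a (Suc i)"
proof (rule ccontr)
  assume "\<not> ?thesis"
  then have "\<forall>i. a (Suc i) \<le> a i" by (simp add: not_less)
  have "a n \<le> a 0" for n
  proof (induction n)
    case (Suc n)
    then show ?case using \<open>\<forall>i. a (Suc i) \<le> a i\<close>[rule_format, of n] by linarith
  qed simp
  with assms show False by (meson not_less)
qed

lemma PP_strict:
  assumes "finite V"
  shows "upset S \<Longrightarrow> (\<lambda>_. 0) \<notin> S \<Longrightarrow> d \<in> S \<Longrightarrow> \<forall>w. w \<notin> V \<longrightarrow> d w = 0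
    \<Longrightarrow> 0 \<le> q \<Longrightarrow> q < q' \<Longrightarrow> q' < 1 \<Longrightarrow> PP V q S < PP V q' S"
  using assms
proof (induction V arbitrary: S d rule: finite_induct)
  case empty
  then have "d = (\<lambda>_. 0)" by auto
  with empty show ?case by simp
next
  case (insert x F)
  define a where "a k t = PP F t {f. f(x := k) \<in> S}" for k t
  have s1: "(\<lambda>k. (1 - q) * q ^ k * a k q) sums PP (insert x F) q S"
    unfolding a_def using insert by (intro PP_decomp) auto
  have s2: "(\<lambda>k. (1 - q') * q' ^ k * a k q') sums PP (insert x F) q' S"
    unfolding a_def using insert by (intro PP_decomp) auto
  have s3: "summable (\<lambda>k. (1 - q) * q ^ k * a k q')"
    using summable_mult[OF summable_geo_bounded[of q "\<lambda>k. a k q'"], of "1-q"] insert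
    by (simp add: a_def PP_nonneg PP_le1 mult.assoc)
  have le: "(1 - q) * q ^ k * a k q \<le> (1 - q) * q ^ k * a k q'" for k
  proof -
    have "a k q \<le> a k q'" unfolding a_def using insert upset_section
      by (intro PP_mono) auto
    then show ?thesis using insert by (intro mult_left_mono) auto
  qed
  have geo: "(\<Sum>k. (1 - q) * q ^ k * a k q') \<le> (\<Sum>k. (1 - q') * q' ^ k * a k q')"
    using insert by (intro geo_mono(1)) (auto simp: a_def PP_nonneg PP_le1 PP_sec_mono)
  have "(\<Sum>k. (1 - q) * q ^ k * a k q) < (\<Sum>k. (1 - q') * q' ^ k * a k q')"
  proof (cases "\<exists>f. f(x := 0) \<in> S \<and> (\<forall>w. w \<notin> F \<longrightarrow> f w = 0)")
    case True
    then obtain f where f: "f(x := 0) \<in> S" "\<forall>w. w \<notin> F \<longrightarrow> f w = 0" by blast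
    have "a 0 q < a 0 q'" unfolding a_def
    proof (rule insert.IH[of _ f])
      show "upset {f. f(x := 0) \<in> S}" using insert upset_section by blast
      have "((\<lambda>_. 0::nat)(x := 0)) = (\<lambda>_. 0)" by auto
      then show "(\<lambda>_. 0) \<notin> {f. f(x := 0) \<in> S}" using insert by auto
    qed (use f insert in auto)
    then have "(1 - q) * q ^ 0 * a 0 q < (1 - q) * q ^ 0 * a 0 q'" using insert by simp
    then have "(\<Sum>k. (1 - q) * q ^ k * a k q) < (\<Sum>k. (1 - q) * q ^ k * a k q')"
      by (intro suminf_strict[OF sums_summable[OF s1] s3 le])
    with geo show ?thesis by linarith
  next
    case False
    have z: "a 0 q' = 0" unfolding a_def using False by (intro PP_zero) (use insert in auto)
    have "(d(x := 0))(x := d x) \<in> S" using insert by simp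
    then have "0 < a (d x) q'" unfolding a_def using insert
      by (intro PP_pos[where d="d(x := 0)"]) auto
    with z obtain i where i: "a i q' < a (Suc i) q'" using mono_seq_jump[of "\<lambda>k. a k q'"] by auto
    have "(\<Sum>k. (1 - q) * q ^ k * a k q) \<le> (\<Sum>k. (1 - q) * q ^ k * a k q')"
      by (rule suminf_le[OF le sums_summable[OF s1] s3])
    also have "\<dots> < (\<Sum>k. (1 - q') * q' ^ k * a k q')"
      using insert i by (intro geo_mono(2)) (auto simp: a_def PP_nonneg PP_le1 PP_sec_mono)
    finally show ?thesis .
  qed
  then show ?case using sums_unique[OF s1] sums_unique[OF s2] by simp
qed

lemma PP_cont:
  assumes "finite V"
  shows "continuous_on {0<..<1} (\<lambda>q. PP V q S)"
  using assms
proof (induction V arbitrary: S rule: finite_induct)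
  case empty
  then show ?case by (simp add: PP_empty)
next
  case (insert x F)
  define a where "a k t = PP F t {f. f(x := k) \<in> S}" for k t
  have ca: "continuous_on {0<..<1} (a k)" for k unfolding a_def by (rule insert.IH)
  have "continuous_on (\<Union>r\<in>{0<..<1::real}. {0<..<r}) (\<lambda>q. PP (insert x F) q S)"
  proof (rule continuous_on_open_UN)
    fix r :: real assume r: "r \<in> {0<..<1}"
    have c: "continuous_on {0<..<r} (\<lambda>t. \<Sum>k. (1 - t) * t ^ k * a k t)"
    proof (rule uniform_limit_theorem)
      show "\<forall>\<^sub>F n in sequentially. continuous_on {0<..<r} (\<lambda>t. \<Sum>k<n. (1 - t) * t ^ k * a k t)"
      proof (intro always_eventually allI continuous_intros)
        fix k
        show "continuous_on {0<..<r} (a k)"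
          using r by (intro continuous_on_subset[OF ca]) auto
      qed
      show "uniform_limit {0<..<r} (\<lambda>n t. \<Sum>k<n. (1 - t) * t ^ k * a k t)
          (\<lambda>t. \<Sum>k. (1 - t) * t ^ k * a k t) sequentially"
      proof (rule Weierstrass_m_test[of _ _ "\<lambda>k. r ^ k"])
        fix k t assume t: "t \<in> {0<..<r}"
        have "\<bar>(1 - t) * t ^ k * a k t\<bar> = (1 - t) * t ^ k * a k t"
          using t r by (auto simp: a_def PP_nonneg)
        also have "\<dots> \<le> 1 * t ^ k * 1"
          using t r by (intro mult_mono) (auto simp: a_def PP_nonneg PP_le1)
        also have "\<dots> \<le> r ^ k" using t by (auto intro: power_mono)
        finally show "norm ((1 - t) * t ^ k * a k t) \<le> r ^ k" by simp
      next
        show "summable (\<lambda>k. r ^ k)" using r by (intro summable_geometric) auto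
      qed
    qed simp
    have eq: "PP (insert x F) t S = (\<Sum>k. (1 - t) * t ^ k * a k t)" if "t \<in> {0<..<r}" for t
      using PP_decomp[of F x t S] insert that r sums_unique unfolding a_def by auto
    show "continuous_on {0<..<r} (\<lambda>q. PP (insert x F) q S)"
      by (rule continuous_on_eq[OF c]) (simp add: eq)
  qed auto
  also have "(\<Union>r\<in>{0<..<1::real}. {0<..<r}) = {0<..<1}"
  proof (safe)
    fix t :: real assume "t \<in> {0<..<1}"
    then show "t \<in> (\<Union>r\<in>{0<..<1::real}. {0<..<r})"
      by (intro UN_I[of "(t+1)/2"]) auto
  qed auto
  finally show ?case .
qed



lemma ln2_half: "1/2 < ln (2::real)"
proof -
  have "exp (1/2::real) ^ 2 = exp 1" by (simp flip: exp_of_nat_mult)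
  also have "\<dots> < 2 ^ 2" using exp_le by simp
  finally have "exp (1/2::real) < 2"
    by (rule power_less_imp_less_base) simp
  then show ?thesis by (metis exp_gt_zero exp_ln exp_less_cancel_iff ln_exp zero_less_numeral)
qed

lemma key_ineq:
  fixes x :: real and N :: nat
  defines "n \<equiv> real N"
  defines "q \<equiv> x / (n + x)"
  assumes N: "3 \<le> N" and x: "0 < x" and xs: "x^2 < n * ln 2"
  shows "1 - ((1 - q^2)^N - ((1-q)*q)^N) < 1/2"
proof -
  have n: "3 \<le> n" using N unfolding n_def by simp
  have l2: "1/2 < ln (2::real)" "ln (2::real) < 1" using ln2_half ln_2_less_1 by auto
  have "n * ln 2 < n * 1" using l2 n by (intro mult_strict_left_mono) auto
  moreover have "n * 1 \<le> n * n" using n by (intro mult_left_mono) auto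
  ultimately have "x^2 < n^2" using xs by (simp add: power2_eq_square)
  then have xn: "x < n" using n by (intro power_less_imp_less_base[of x 2 n]) auto
  have q0: "0 < q" and qh: "q \<le> 1/2" using x xn n unfolding q_def by (auto simp: field_simps)
  have "q*q \<le> 1*(1/2)" using q0 qh by (intro mult_mono) auto
  then have q1: "q^2 < 1" by (simp add: power2_eq_square)
  define t where "t = q^2 / (1 - q^2)"
  have lnb: "- t \<le> ln (1 - q^2)"
  proof -
    have "ln (inverse (1 - q^2)) \<le> inverse (1 - q^2) - 1"
      using q1 by (intro ln_le_minus_one) simp
    also have "inverse (1 - q^2) - 1 = t" unfolding t_def using q1 by (simp add: field_simps)
    finally show ?thesis by (simp add: ln_inverse)
  qed
  have qx: "q*(n+x) = x" unfolding q_def using x n by simp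
  have "(1 - q^2)*(n+x)^2 = (n+x)^2 - (q*(n+x))^2" by (simp add: algebra_simps power2_eq_square)
  also have "\<dots> = n*(n+2*x)" unfolding qx by (simp add: algebra_simps power2_eq_square)
  finally have d: "1 - q^2 = n*(n+2*x)/(n+x)^2" using x n by (simp add: eq_divide_eq)
  have "t = (x^2/(n+x)^2) / (n*(n+2*x)/(n+x)^2)" unfolding t_def d
    unfolding q_def by (simp add: power_divide)
  also have "\<dots> = x^2 / (n*(n+2*x))" using x n by (simp add: field_simps)
  finally have Nt: "N * t = x^2 / (n + 2*x)"
    unfolding n_def[symmetric] using x n by simp
  have "(1 - q^2)^N = exp (N * ln (1 - q^2))"
    using q1 by (simp add: exp_of_nat_mult)
  also have "\<dots> \<ge> exp (- (x^2 / (n + 2*x)))"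
  proof -
    have "real N * (- t) \<le> N * ln (1 - q^2)" using lnb by (intro mult_left_mono) auto
    then show ?thesis using Nt by simp
  qed
  finally have A1: "exp (- (x^2 / (n + 2*x))) \<le> (1 - q^2)^N" .
  define s where "s = 2 * x * ln 2 / (n + 2*x)"
  have "(n+2*x) * x^2 < (n+2*x)*(n*ln 2)" using xs x n by (intro mult_strict_left_mono) auto
  then have "x^2 / (n + 2*x) < ln 2 - s"
    unfolding s_def using x n by (simp add: field_simps)
  then have e1: "exp (- ln 2 + s) < exp (- (x^2 / (n + 2*x)))" by simp
  have e2: "exp (- ln 2 + s) = exp s / 2"
    by (simp add: exp_diff)
  have e3: "1 + s \<le> exp s" by simp
  have "(1 + s)/2 \<le> exp s / 2" by (rule divide_right_mono[OF e3]) simp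
  also have "\<dots> = exp (- ln 2 + s)" by (rule e2[symmetric])
  also have "\<dots> < exp (- (x^2 / (n + 2*x)))" by (rule e1)
  also have "\<dots> \<le> (1 - q^2)^N" by (rule A1)
  finally have "(1 + s)/2 < (1 - q^2)^N" .
  moreover have "(1 + s)/2 = 1/2 + x * ln 2 / (n + 2*x)" unfolding s_def by simp
  ultimately have A2: "1/2 + x * ln 2 / (n + 2*x) < (1 - q^2)^N" by simp
  have "((1-q)*q)^N \<le> q^N" using q0 qh by (intro power_mono) auto
  also have "\<dots> \<le> q^3" using q0 qh N by (intro power_decreasing) auto
  also have "\<dots> = q * q^2" by (simp add: power3_eq_cube power2_eq_square)
  also have "\<dots> \<le> q * (1/4)"
  proof -
    have "q*q \<le> (1/2)*(1/2)" using q0 qh by (intro mult_mono) auto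
    then show ?thesis using q0 by (intro mult_left_mono) (auto simp: power2_eq_square)
  qed
  also have "\<dots> \<le> x * ln 2 / (n + 2*x)"
  proof -
    have "2 * (n + x) \<le> (4 * ln 2) * (n + x)" using l2 x n by (intro mult_right_mono) auto
    moreover have "n + 2*x \<le> 2 * (n + x)" using n by simp
    ultimately have "n + 2*x \<le> 4 * ln 2 * (n + x)" by (rule order_trans[rotated])
    then have "x * (n + 2*x) \<le> x * (4 * ln 2 * (n + x))" using x by (intro mult_left_mono) auto
    then show ?thesis unfolding q_def using x n by (simp add: field_simps)
  qed
  finally show ?thesis using A2 by linarith
qed



lemma move_mono:
  assumes "pebbling_move E d e" "\<forall>w. d w \<le> d' w"
  shows "\<exists>e'. pebbling_move E d' e' \<and> (\<forall>w. e w \<le> e' w)"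
proof -
  obtain u v where uv: "E u v" "2 \<le> d u" "e = d(u := d u - 2, v := d v + 1)"
    using assms(1) unfolding pebbling_move_def by blast
  define e' where "e' = d'(u := d' u - 2, v := d' v + 1)"
  have "2 \<le> d' u" using uv assms(2) by (metis order_trans)
  then have "pebbling_move E d' e'" unfolding pebbling_move_def e'_def using uv by blast
  moreover have "\<forall>w. e w \<le> e' w" unfolding uv e'_def using assms(2)
    by (auto simp: diff_le_mono)
  ultimately show ?thesis by blast
qed

lemma star_mono:
  assumes "(pebbling_move E)\<^sup>*\<^sup>* d e" "\<forall>w. d w \<le> d' w"
  shows "\<exists>e'. (pebbling_move E)\<^sup>*\<^sup>* d' e' \<and> (\<forall>w. e w \<le> e' w)"
  using assms(1)
proof (induction rule: rtranclp_induct)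
  case base
  then show ?case using assms(2) by blast
next
  case (step y z)
  then obtain y' where y': "(pebbling_move E)\<^sup>*\<^sup>* d' y'" "\<forall>w. y w \<le> y' w" by blast
  then obtain z' where "pebbling_move E y' z'" "\<forall>w. z w \<le> z' w"
    using move_mono step(2) by blast
  then show ?case using y' by (meson rtranclp.rtrancl_into_rtrancl)
qed

lemma solvable_upset: "upset {d. solvable V E d}"
  unfolding upset_def solvable_def pebblable_def
proof (clarsimp)
  fix d d' r assume h: "\<forall>r\<in>V. \<exists>e. (pebbling_move E)\<^sup>*\<^sup>* d e \<and> Suc 0 \<le> e r"
    "\<forall>w. d w \<le> d' w" "r \<in> V"
  then obtain e where e: "(pebbling_move E)\<^sup>*\<^sup>* d e" "Suc 0 \<le> e r" by blast
  then obtain e' where "(pebbling_move E)\<^sup>*\<^sup>* d' e'" "\<forall>w. e w \<le> e' w"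
    using star_mono h(2) by blast
  with e show "\<exists>e. (pebbling_move E)\<^sup>*\<^sup>* d' e \<and> Suc 0 \<le> e r"
    by (meson order_trans)
qed

lemma no_moves:
  assumes g: "is_graph V E" and d: "\<forall>v\<in>V. d v \<le> 1" and st: "(pebbling_move E)\<^sup>*\<^sup>* d e"
  shows "e = d"
  using st
proof (induction rule: rtranclp_induct)
  case base then show ?case by simp
next
  case (step y z)
  then obtain u v where "E u v" "2 \<le> y u" using pebbling_move_def by blast
  moreover have "u \<in> V" using g calculation unfolding is_graph_def by blast
  ultimately show ?case using d step by auto
qed

lemma unsolvable_small:
  assumes g: "is_graph V E" and d: "\<forall>v\<in>V. d v \<le> 1" and v: "v \<in> V" "d v = 0"
  shows "\<not> solvable V E d"
proof
  assume "solvable V E d"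
  then obtain e where e: "(pebbling_move E)\<^sup>*\<^sup>* d e" "1 \<le> e v"
    using v unfolding solvable_def pebblable_def by blast
  have "e = d" by (rule no_moves[OF g d e(1)])
  then show False using e(2) v by simp
qed

lemma solvable_big:
  assumes "\<forall>v\<in>V. 1 \<le> d v"
  shows "solvable V E d"
  using assms unfolding solvable_def pebblable_def by blast

lemma prob_geom_le1: "0 \<le> q \<Longrightarrow> q < 1 \<Longrightarrow> measure_pmf.prob (geometric_pmf (1 - q)) {..1} = 1 - q^2"
  by (subst measure_measure_pmf_finite) (auto simp: power2_eq_square algebra_simps atMost_Suc)

lemma prob_geom_1: "0 \<le> q \<Longrightarrow> q < 1 \<Longrightarrow> measure_pmf.prob (geometric_pmf (1 - q)) {1} = (1 - q) * q"
  by (simp add: measure_pmf_single)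

lemma prob_geom_ge1: "0 \<le> q \<Longrightarrow> q < 1 \<Longrightarrow> measure_pmf.prob (geometric_pmf (1 - q)) {1..} = q"
proof -
  assume q: "0 \<le> q" "q < 1"
  have "{1..} = UNIV - {0::nat}" by auto
  then have "measure_pmf.prob (geometric_pmf (1 - q)) {1..} = 1 - measure_pmf.prob (geometric_pmf (1 - q)) {0}"
    using measure_pmf.prob_compl[of "{0::nat}" "geometric_pmf (1-q)"] by simp
  also have "\<dots> = q" using q by (simp add: measure_pmf_single)
  finally show ?thesis .
qed

lemma PP_Pi: "finite V \<Longrightarrow> PP V q (Pi V (\<lambda>_. B)) = measure_pmf.prob (geometric_pmf (1 - q)) B ^ card V"
  unfolding PP_def by (simp add: measure_Pi_pmf_Pi)



lemma graph_facts:
  assumes g: "is_graph V E" and N: "3 \<le> card V"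
  defines "S \<equiv> {d. solvable V E d}"
  shows "continuous_on {0<..<1} (\<lambda>q. PP V q S)"
    and "\<And>q q'. 0 \<le> q \<Longrightarrow> q < q' \<Longrightarrow> q' < 1 \<Longrightarrow> PP V q S < PP V q' S"
    and "\<And>q. 0 \<le> q \<Longrightarrow> q < 1 \<Longrightarrow> PP V q S \<le> 1 - ((1 - q^2)^card V - ((1-q)*q)^card V)"
    and "\<And>q. 0 \<le> q \<Longrightarrow> q < 1 \<Longrightarrow> q^card V \<le> PP V q S"
proof -
  have fin: "finite V" using g unfolding is_graph_def by blast
  have ne: "V \<noteq> {}" using N by auto
  then obtain v0 where v0: "v0 \<in> V" by blast
  show "continuous_on {0<..<1} (\<lambda>q. PP V q S)" by (rule PP_cont[OF fin])
  show "\<And>q q'. 0 \<le> q \<Longrightarrow> q < q' \<Longrightarrow> q' < 1 \<Longrightarrow> PP V q S < PP V q' S"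
  proof -
    fix q q' :: real assume q: "0 \<le> q" "q < q'" "q' < 1"
    show "PP V q S < PP V q' S"
    proof (rule PP_strict[OF fin, where d="\<lambda>v. if v \<in> V then 1 else 0"])
      show "upset S" unfolding S_def by (rule solvable_upset)
      have "\<not> solvable V E (\<lambda>_. 0)" using unsolvable_small[OF g _ v0] by simp
      then show "(\<lambda>_. 0) \<notin> S" unfolding S_def by simp
      show "(\<lambda>v. if v \<in> V then 1 else 0) \<in> S" unfolding S_def
        by (simp add: solvable_big)
    qed (use q in auto)
  qed
  show "\<And>q. 0 \<le> q \<Longrightarrow> q < 1 \<Longrightarrow> PP V q S \<le> 1 - ((1 - q^2)^card V - ((1-q)*q)^card V)"
  proof -
    fix q :: real assume q: "0 \<le> q" "q < 1"
    define A where "A = Pi V (\<lambda>_::nat. {..1::nat})"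
    define B where "B = Pi V (\<lambda>_::nat. {1::nat})"
    let ?M = "Pi_pmf V 0 (\<lambda>_. geometric_pmf (1 - q))"
    have BA: "B \<subseteq> A" unfolding A_def B_def by (auto simp: Pi_iff)
    have sub: "S \<subseteq> UNIV - (A - B)"
    proof
      fix d assume "d \<in> S"
      then have sd: "solvable V E d" unfolding S_def by simp
      show "d \<in> UNIV - (A - B)"
      proof (rule ccontr)
        assume "d \<notin> UNIV - (A - B)"
        then have dA: "\<forall>v\<in>V. d v \<le> 1" and "\<not> (\<forall>v\<in>V. d v = 1)"
          unfolding A_def B_def by auto
        then obtain v where "v \<in> V" "d v = 0" by force
        then show False using unsolvable_small[OF g dA] sd by blast
      qed
    qed
    have "PP V q S \<le> measure_pmf.prob ?M (UNIV - (A - B))"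
      unfolding PP_def by (intro measure_pmf.finite_measure_mono sub) auto
    also have "\<dots> = 1 - measure_pmf.prob ?M (A - B)"
      using measure_pmf.prob_compl[of "A - B" ?M] by simp
    also have "measure_pmf.prob ?M (A - B) = measure_pmf.prob ?M A - measure_pmf.prob ?M B"
      using BA by (intro measure_pmf.finite_measure_Diff) auto
    also have "measure_pmf.prob ?M A = (1 - q^2)^card V"
      using PP_Pi[OF fin, of q "{..1}"] prob_geom_le1[OF q] unfolding A_def PP_def by simp
    also have "measure_pmf.prob ?M B = ((1-q)*q)^card V"
      using PP_Pi[OF fin, of q "{1}"] prob_geom_1[OF q] unfolding B_def PP_def by simp
    finally show "PP V q S \<le> 1 - ((1 - q^2)^card V - ((1-q)*q)^card V)" .
  qed
  show "\<And>q. 0 \<le> q \<Longrightarrow> q < 1 \<Longrightarrow> q^card V \<le> PP V q S"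
  proof -
    fix q :: real assume q: "0 \<le> q" "q < 1"
    have "q^card V = PP V q (Pi V (\<lambda>_. {1..}))"
      using PP_Pi[OF fin, of q "{1..}"] prob_geom_ge1[OF q] by simp
    also have "\<dots> \<le> PP V q S" unfolding PP_def S_def
      by (intro measure_pmf.finite_measure_mono) (auto simp: Pi_iff intro!: solvable_big)
    finally show "q^card V \<le> PP V q S" .
  qed
qed



theorem theorem26:
  shows "\<exists>n1::nat. 1 \<le> n1 \<and>
    (\<forall>V E. is_graph V E \<and> n1 \<le> card V \<longrightarrow>
        sqrt (real (card V) * ln 2) \<le> geom_threshold V E)"
proof (intro exI[of _ 3] conjI allI impI)
  fix V E assume asm: "is_graph V E \<and> 3 \<le> card V"
  then have g: "is_graph V E" and N: "3 \<le> card V" by auto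
  define S where "S = {d. solvable V E d}"
  define n where "n = real (card V)"
  have n3: "3 \<le> n" using N unfolding n_def by simp
  note gf = graph_facts[OF g N, folded S_def]
  define h where "h x = PP V (x / (n + x)) S" for x
  have qr: "0 < x / (n + x)" "x / (n + x) < 1" if "0 < x" for x
    using that n3 by (auto simp: field_simps)
  have qm: "x / (n + x) < y / (n + y)" if "0 < x" "x < y" for x y
  proof -
    have "x * (n + y) < y * (n + x)" using that n3 by (simp add: algebra_simps)
    then show ?thesis using that n3 by (simp add: field_simps)
  qed
  have sp: "solvable_prob V E (inverse (1 + x / real (card V))) = h x" if "0 < x" for x
  proof -
    have "inverse (1 + x / n) = 1 - x / (n + x)" using that n3 by (simp add: field_simps)
    then show ?thesis unfolding solvable_prob_def h_def PP_def S_def n_def by simp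
  qed
  have hstrict: "h x < h y" if "0 < x" "x < y" for x y
    unfolding h_def using gf(2)[of "x/(n+x)" "y/(n+y)"] qr[of x] qr[of y] qm[OF that] that by simp
  have hcont: "continuous_on {0<..} h"
  proof -
    have "continuous_on {0<..} (\<lambda>x. x / (n + x))"
      using n3 by (intro continuous_intros) auto
    moreover have "(\<lambda>x. x / (n + x)) ` {0<..} \<subseteq> {0<..<1}" using qr by auto
    ultimately show ?thesis unfolding h_def
      by (rule continuous_on_compose2[OF gf(1)])
  qed
  have hsmall: "h x < 1/2" if "0 < x" "x^2 < n * ln 2" for x
  proof -
    have "h x \<le> 1 - ((1 - (x/(n+x))^2)^card V - ((1-x/(n+x))*(x/(n+x)))^card V)"
      unfolding h_def by (rule gf(3)) (use qr[OF that(1)] in auto)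
    also have "\<dots> < 1/2" using key_ineq[of "card V" x] N that unfolding n_def by simp
    finally show ?thesis .
  qed
  define b where "b = 2 * n^2"
  have b0: "0 < b" unfolding b_def using n3 by simp
  have hbig: "1/2 < h b"
  proof -
    define q where "q = b / (n + b)"
    have q01: "0 < q" "q < 1" unfolding q_def using qr[OF b0] by auto
    have "1 - q = n / (n + b)" unfolding q_def using n3 b0 by (simp add: field_simps)
    also have "n + b = n * (1 + 2*n)" unfolding b_def by (simp add: power2_eq_square algebra_simps)
    also have "n / (n * (1 + 2*n)) = 1 / (1 + 2*n)" using n3 by simp
    finally have q1: "1 - q = 1 / (1 + 2*n)" .
    have "1 + real (card V) * (q - 1) \<le> (1 + (q - 1))^card V"
      using q01 by (intro Bernoulli_inequality) auto
    then have B: "1 + n * (q - 1) \<le> q^card V" unfolding n_def[symmetric] by simp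
    have "q - 1 = - (1 / (1 + 2*n))" using q1 by linarith
    then have "n * (q - 1) = - (n / (1 + 2*n))" by simp
    with B have "1 - n / (1 + 2*n) \<le> q^card V" by linarith
    moreover have "n / (1 + 2*n) < 1/2" using n3 by (simp add: field_simps)
    moreover have "q^card V \<le> h b" unfolding h_def q_def[symmetric] using gf(4) q01 by simp
    ultimately show ?thesis by linarith
  qed
  define s where "s = sqrt (n * ln 2)"
  have l2: "0 < ln (2::real)" "ln (2::real) < 1" using ln_2_less_1 by auto
  have s0: "0 < s" unfolding s_def using n3 l2 by simp
  have ss: "s^2 = n * ln 2" unfolding s_def using n3 l2 by simp
  have "n * ln 2 \<le> n * n" using n3 l2 by (intro mult_left_mono) auto
  then have "sqrt (n * ln 2) \<le> sqrt (n * n)" by (rule real_sqrt_le_mono)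
  then have sn: "s \<le> n" unfolding s_def using n3 by simp
  define a where "a = s / 2"
  have a0: "0 < a" unfolding a_def using s0 by simp
  have "a^2 = n * ln 2 / 4" unfolding a_def using ss by (simp add: power_divide)
  moreover have "0 < n * ln 2" using n3 l2 by simp
  ultimately have "a^2 < n * ln 2" by linarith
  then have ha: "h a \<le> 1/2" using hsmall[OF a0] by simp
  have "n * 1 \<le> n * (2*n)" using n3 by (intro mult_left_mono) auto
  then have "n \<le> b" unfolding b_def by (simp add: power2_eq_square)
  then have ab: "a \<le> b" unfolding a_def using sn s0 by linarith
  have "continuous_on {a..b} h" using a0 by (intro continuous_on_subset[OF hcont]) auto
  then obtain x0 where x0: "a \<le> x0" "x0 \<le> b" "h x0 = 1/2"
    using IVT'[of h a "1/2" b, OF ha less_imp_le[OF hbig] ab] by blast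
  have x00: "0 < x0" using x0 a0 by simp
  let ?P = "\<lambda>x. 0 < x \<and> solvable_prob V E (inverse (1 + x / real (card V))) = 1/2"
  have Px0: "?P x0" using x00 x0 sp by simp
  have uniq: "y = x0" if "?P y" for y
  proof -
    have y: "0 < y" "h y = 1/2" using that sp by auto
    show ?thesis
    proof (rule ccontr)
      assume "y \<noteq> x0"
      then consider "y < x0" | "x0 < y" by linarith
      then show False
      proof cases
        case 1 then show False using hstrict[OF y(1) 1] y x0(3) by simp
      next
        case 2 then show False using hstrict[OF x00 2] y x0(3) by simp
      qed
    qed
  qed
  have ex1: "\<exists>!x. ?P x" using Px0 uniq by blast
  have "geom_threshold V E = x0" unfolding geom_threshold_def
    by (rule the1_equality[OF ex1 Px0])
  moreover have "s \<le> x0"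
  proof (rule ccontr)
    assume "\<not> s \<le> x0"
    then have "x0 < s" by simp
    then have "x0^2 < s^2" using x00 by (simp add: power_strict_mono)
    then have "h x0 < 1/2" using hsmall[OF x00] ss by simp
    then show False using x0 by simp
  qed
  ultimately show "sqrt (real (card V) * ln 2) \<le> geom_threshold V E"
    unfolding s_def n_def by simp
qed simp

end
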